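(* Let $G$ be a finite connected graph (multiple edges allowed, no loops) with vertices $v_1,\dots,v_n$, and let $i\neq j$. The pair $\{v_i,v_j\}$ has order $1$ if and only if there is a path $\mathcal{P}$ in $G$ from $v_i$ to $v_j$ (with pairwise distinct edges) such that for every edge $e$ of $\mathcal{P}$ the graph $G\setminus\{e\}$ is disconnected. Consequently, $G$ is multiply connected if and only if its Laplacian is spread.
   Context: For $i\neq j$ let $c_{ij}$ be the number of edges joining $v_i$ and $v_j$, and let $c_{ii}=-\sum_{j\neq i}c_{ij}$. Let $M(G)=(c_{ij})\in M_n(\mathbb{Z})$; the Laplacian of $G$ is $-M(G)$. Let $e_1,\dots,e_n$ be the standard basis of $\mathbb{Z}^n$ and $E_{ij}=e_i-e_j$. For an integer $h>0$, a pair $\{v_i,v_j\}$ ($i\ne j$) has order $h$ if there is $S=(s_1,\dots,s_n)^t\in\mathbb{Z}^n$ with $M(G)S=hE_{ij}$ and $\gcd(s_1-s_n,\dots,s_{n-1}-s_n)=1$; equivalently, the image of $E_{ij}$ in $\mathbb{Z}^n/\mathrm{Im}(M(G))$ has order exactly $h$. A graph is multiply connected if removing any single edge leaves it connected. A matrix $M\in M_n(\mathbb{Z})$ is spread if the quotient map $\mathbb{Z}^n\to\mathbb{Z}^n/\mathrm{Im}(M)$ (where $\mathrm{Im}(M)$ is the $\mathbb{Z}$-span of the columns) is injective on $\{e_1,\dots,e_n\}$, i.e. no $E_{ij}$ ($i\neq j$) lies in $\mathrm{Im}(M)$. *)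

theory Defs
  imports Main
begin

text \<open>A finite multigraph without loops on vertex set {0..<n} (vertex v_(k+1) is k):
  edges form a finite set E of type 'e, each edge e having endpoints ep e = (a,b).\<close>

definition wf_multigraph :: "nat \<Rightarrow> 'e set \<Rightarrow> ('e \<Rightarrow> nat \<times> nat) \<Rightarrow> bool" where
  "wf_multigraph n E ep \<longleftrightarrow> finite E \<and>
     (\<forall>e\<in>E. fst (ep e) < n \<and> snd (ep e) < n \<and> fst (ep e) \<noteq> snd (ep e))"

definition joins :: "('e \<Rightarrow> nat \<times> nat) \<Rightarrow> 'e \<Rightarrow> nat \<Rightarrow> nat \<Rightarrow> bool" where
  "joins ep e u v \<longleftrightarrow> ep e = (u, v) \<or> ep e = (v, u)"

definition adj_rel :: "'e set \<Rightarrow> ('e \<Rightarrow> nat \<times> nat) \<Rightarrow> (nat \<times> nat) set" where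
  "adj_rel F ep = {(u, v). \<exists>e\<in>F. joins ep e u v}"

definition mg_connected :: "nat \<Rightarrow> 'e set \<Rightarrow> ('e \<Rightarrow> nat \<times> nat) \<Rightarrow> bool" where
  "mg_connected n F ep \<longleftrightarrow> (\<forall>u<n. \<forall>v<n. (u, v) \<in> (adj_rel F ep)\<^sup>*)"

definition multiply_connected :: "nat \<Rightarrow> 'e set \<Rightarrow> ('e \<Rightarrow> nat \<times> nat) \<Rightarrow> bool" where
  "multiply_connected n E ep \<longleftrightarrow> (\<forall>e\<in>E. mg_connected n (E - {e}) ep)"

definition is_path :: "'e set \<Rightarrow> ('e \<Rightarrow> nat \<times> nat) \<Rightarrow> nat \<Rightarrow> nat \<Rightarrow> 'e list \<Rightarrow> nat list \<Rightarrow> bool" where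
  "is_path E ep i j es vs \<longleftrightarrow> set es \<subseteq> E \<and> distinct es \<and>
     length vs = Suc (length es) \<and> vs ! 0 = i \<and> vs ! length es = j \<and>
     (\<forall>k<length es. joins ep (es ! k) (vs ! k) (vs ! Suc k))"

definition Mmat :: "'e set \<Rightarrow> ('e \<Rightarrow> nat \<times> nat) \<Rightarrow> nat \<Rightarrow> nat \<Rightarrow> nat \<Rightarrow> int" where
  "Mmat E ep n i j = (if i = j then - (\<Sum>k\<in>{0..<n} - {i}. int (card {e\<in>E. joins ep e i k}))
                      else int (card {e\<in>E. joins ep e i j}))"

definition matvec :: "nat \<Rightarrow> (nat \<Rightarrow> nat \<Rightarrow> int) \<Rightarrow> (nat \<Rightarrow> int) \<Rightarrow> nat \<Rightarrow> int" where
  "matvec n A x = (\<lambda>i. \<Sum>j<n. A i j * x j)"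

definition Evec :: "nat \<Rightarrow> nat \<Rightarrow> nat \<Rightarrow> int" where
  "Evec i j = (\<lambda>k. (if k = i then 1 else 0) - (if k = j then 1 else 0))"

text \<open>The pair {v_i, v_j} has order h (paper's definition; indices 0-based, s_n is s (n-1)).\<close>
definition has_order :: "nat \<Rightarrow> (nat \<Rightarrow> nat \<Rightarrow> int) \<Rightarrow> nat \<Rightarrow> nat \<Rightarrow> nat \<Rightarrow> bool" where
  "has_order n A i j h \<longleftrightarrow> (\<exists>s :: nat \<Rightarrow> int.
     (\<forall>k<n. matvec n A s k = int h * Evec i j k) \<and>
     Gcd ((\<lambda>k. s k - s (n - 1)) ` {0..<n - 1}) = 1)"

definition in_image :: "nat \<Rightarrow> (nat \<Rightarrow> nat \<Rightarrow> int) \<Rightarrow> (nat \<Rightarrow> int) \<Rightarrow> bool" where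
  "in_image n A y \<longleftrightarrow> (\<exists>x :: nat \<Rightarrow> int. \<forall>k<n. matvec n A x k = y k)"

definition spread :: "nat \<Rightarrow> (nat \<Rightarrow> nat \<Rightarrow> int) \<Rightarrow> bool" where
  "spread n A \<longleftrightarrow> (\<forall>i<n. \<forall>j<n. i \<noteq> j \<longrightarrow> \<not> in_image n A (Evec i j))"

definition laplacian :: "'e set \<Rightarrow> ('e \<Rightarrow> nat \<times> nat) \<Rightarrow> nat \<Rightarrow> nat \<Rightarrow> nat \<Rightarrow> int" where
  "laplacian E ep n i j = - Mmat E ep n i j"

end

theory Submission
  imports Defs
begin

definition ew :: "('e \<Rightarrow> nat \<times> nat) \<Rightarrow> (nat \<Rightarrow> int) \<Rightarrow> 'e \<Rightarrow> nat \<Rightarrow> int" where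
  "ew ep s e k = (if fst (ep e) = k then s (snd (ep e)) - s (fst (ep e)) else 0)
              + (if snd (ep e) = k then s (fst (ep e)) - s (snd (ep e)) else 0)"

definition cross :: "('e \<Rightarrow> nat \<times> nat) \<Rightarrow> (nat \<Rightarrow> int) \<Rightarrow> nat set \<Rightarrow> 'e \<Rightarrow> int" where
  "cross ep s U e = (if fst (ep e) \<in> U then s (snd (ep e)) - s (fst (ep e)) else 0)
              + (if snd (ep e) \<in> U then s (fst (ep e)) - s (snd (ep e)) else 0)"

lemma cross_sum: "finite U \<Longrightarrow> (\<Sum>k\<in>U. ew ep s e k) = cross ep s U e"
  unfolding ew_def cross_def by (simp add: sum.distrib)

lemma matvec_edges:
  assumes wf: "wf_multigraph n E ep" and k: "k < n"
  shows "matvec n (Mmat E ep n) s k = (\<Sum>e\<in>E. ew ep s e k)"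
proof -
  let ?A = "\<lambda>l. {e\<in>E. joins ep e k l}"
  let ?T = "{0..<n} - {k}"
  define S where "S = {e\<in>E. fst (ep e) = k \<or> snd (ep e) = k}"
  define g where "g e = (if fst (ep e) = k then snd (ep e) else fst (ep e))" for e
  have fin: "finite E" using wf unfolding wf_multigraph_def by auto
  have "matvec n (Mmat E ep n) s k = Mmat E ep n k k * s k + (\<Sum>l\<in>?T. Mmat E ep n k l * s l)"
    unfolding matvec_def using k
    by (simp add: atLeast0LessThan[symmetric] sum.remove[of "{0..<n}" k])
  also have "\<dots> = (\<Sum>l\<in>?T. int (card (?A l)) * (s l - s k))"
    by (simp add: Mmat_def sum_distrib_right right_diff_distrib sum_subtractf)
  also have "\<dots> = (\<Sum>l\<in>?T. \<Sum>e\<in>?A l. ew ep s e k)"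
  proof (rule sum.cong[OF refl])
    fix l assume l: "l \<in> ?T"
    have "\<forall>e\<in>?A l. ew ep s e k = s l - s k"
    proof
      fix e assume e: "e \<in> ?A l"
      obtain a b where ab: "ep e = (a, b)" by force
      show "ew ep s e k = s l - s k" using e l ab by (auto simp: ew_def joins_def)
    qed
    then show "int (card (?A l)) * (s l - s k) = (\<Sum>e\<in>?A l. ew ep s e k)"
      by simp
  qed
  also have "\<dots> = (\<Sum>l\<in>?T. \<Sum>e\<in>{x. x \<in> S \<and> g x = l}. ew ep s e k)"
  proof (rule sum.cong[OF refl])
    fix l assume l: "l \<in> ?T"
    have "?A l = {x. x \<in> S \<and> g x = l}"
      using l by (auto simp: S_def g_def joins_def prod_eq_iff)
    then show "(\<Sum>e\<in>?A l. ew ep s e k) = (\<Sum>e\<in>{x. x \<in> S \<and> g x = l}. ew ep s e k)" by simp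
  qed
  also have "\<dots> = (\<Sum>e\<in>S. ew ep s e k)"
  proof (rule sum.group)
    show "finite S" using fin by (simp add: S_def)
    show "g ` S \<subseteq> ?T" using wf unfolding S_def g_def wf_multigraph_def by force
  qed simp
  also have "\<dots> = (\<Sum>e\<in>E. ew ep s e k)"
    by (rule sum.mono_neutral_left) (auto simp: fin S_def ew_def)
  finally show ?thesis .
qed

lemma sum_U:
  assumes wf: "wf_multigraph n E ep" and U: "U \<subseteq> {0..<n}"
  shows "(\<Sum>k\<in>U. matvec n (Mmat E ep n) s k) = (\<Sum>e\<in>E. cross ep s U e)"
proof -
  have fU: "finite U" using U finite_subset by blast
  have "(\<Sum>k\<in>U. matvec n (Mmat E ep n) s k) = (\<Sum>k\<in>U. \<Sum>e\<in>E. ew ep s e k)"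
    using U matvec_edges[OF wf] by (intro sum.cong) auto
  also have "\<dots> = (\<Sum>e\<in>E. \<Sum>k\<in>U. ew ep s e k)" by (rule sum.swap)
  also have "\<dots> = (\<Sum>e\<in>E. cross ep s U e)" by (simp add: cross_sum[OF fU])
  finally show ?thesis .
qed

lemma sum_Evec: "finite U \<Longrightarrow> (\<Sum>k\<in>U. Evec i j k) = (if i \<in> U then 1 else 0) - (if j \<in> U then 1 else 0)"
  unfolding Evec_def by (simp add: sum_subtractf)


lemma walk_path:
  assumes "(i, j) \<in> (adj_rel F ep)\<^sup>*"
  shows "\<exists>es vs. set es \<subseteq> F \<and> distinct vs \<and> length vs = Suc (length es) \<and> vs ! 0 = i \<and>
      vs ! length es = j \<and> (\<forall>k<length es. joins ep (es ! k) (vs ! k) (vs ! Suc k))"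
  using assms
proof (induction rule: rtrancl_induct)
  case base
  show ?case by (rule exI[of _ "[]"], rule exI[of _ "[i]"]) simp
next
  case (step y z)
  then obtain es vs where P: "set es \<subseteq> F" "distinct vs" "length vs = Suc (length es)" "vs ! 0 = i"
      "vs ! length es = y" "\<forall>k<length es. joins ep (es ! k) (vs ! k) (vs ! Suc k)" by blast
  from step(2) obtain e where e: "e \<in> F" "joins ep e y z" unfolding adj_rel_def by blast
  show ?case
  proof (cases "z \<in> set vs")
    case True
    then obtain p where p: "p < length vs" "vs ! p = z" by (metis in_set_conv_nth)
    show ?thesis
    proof (rule exI[of _ "take p es"], rule exI[of _ "take (Suc p) vs"], intro conjI)
      show "set (take p es) \<subseteq> F" by (meson P(1) set_take_subset subset_trans)
      show "distinct (take (Suc p) vs)" using P(2) by simp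
      show "length (take (Suc p) vs) = Suc (length (take p es))" using P(3) p by simp
      show "take (Suc p) vs ! 0 = i" using P(4) by simp
      show "take (Suc p) vs ! length (take p es) = z" using P(3) p by simp
      show "\<forall>k<length (take p es). joins ep (take p es ! k) (take (Suc p) vs ! k) (take (Suc p) vs ! Suc k)"
        using P(6) by simp
    qed
  next
    case False
    show ?thesis
    proof (rule exI[of _ "es @ [e]"], rule exI[of _ "vs @ [z]"], intro conjI)
      show "set (es @ [e]) \<subseteq> F" using P(1) e by simp
      show "distinct (vs @ [z])" using P(2) False by simp
      show "length (vs @ [z]) = Suc (length (es @ [e]))" using P(3) by simp
      show "(vs @ [z]) ! 0 = i" using P(3,4) by (simp add: nth_append)
      show "(vs @ [z]) ! length (es @ [e]) = z" using P(3) by (simp add: nth_append)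
      show "\<forall>k<length (es @ [e]). joins ep ((es @ [e]) ! k) ((vs @ [z]) ! k) ((vs @ [z]) ! Suc k)"
      proof (intro allI impI)
        fix k assume k: "k < length (es @ [e])"
        show "joins ep ((es @ [e]) ! k) ((vs @ [z]) ! k) ((vs @ [z]) ! Suc k)"
        proof (cases "k < length es")
          case True then show ?thesis using P(3,6) by (simp add: nth_append)
        next
          case False
          then have "k = length es" using k by simp
          then show ?thesis using P(3,5) e(2) by (simp add: nth_append)
        qed
      qed
    qed
  qed
qed

lemma distinct_edges:
  assumes "distinct vs" "length vs = Suc (length es)"
    "\<forall>k<length es. joins ep (es ! k) (vs ! k) (vs ! Suc k)"
  shows "distinct es"
proof -
  have "es ! p \<noteq> es ! q" if pq: "p < q" "q < length es" for p q
  proof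
    assume eq: "es ! p = es ! q"
    have "joins ep (es ! p) (vs ! p) (vs ! Suc p)" "joins ep (es ! q) (vs ! q) (vs ! Suc q)"
      using assms(3) pq by auto
    then have "vs ! p = vs ! q \<or> vs ! p = vs ! Suc q" using eq unfolding joins_def by auto
    moreover have "vs ! p \<noteq> vs ! q" "vs ! p \<noteq> vs ! Suc q"
      using assms(1,2) pq by (simp_all add: nth_eq_iff_index_eq)
    ultimately show False by blast
  qed
  then show ?thesis unfolding distinct_conv_nth
  proof (intro allI impI)
    fix p q assume H: "\<And>p q. p < q \<Longrightarrow> q < length es \<Longrightarrow> es ! p \<noteq> es ! q"
      and pq: "p < length es" "q < length es" "p \<noteq> q"
    have "p < q \<or> q < p" using pq(3) by arith
    then show "es ! p \<noteq> es ! q" using H[of p q] H[of q p] pq by auto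
  qed
qed

lemma adj_sym: "(a, b) \<in> (adj_rel F ep)\<^sup>* \<Longrightarrow> (b, a) \<in> (adj_rel F ep)\<^sup>*"
proof -
  have c: "(adj_rel F ep)\<inverse> = adj_rel F ep" unfolding adj_rel_def joins_def by auto
  assume "(a, b) \<in> (adj_rel F ep)\<^sup>*"
  then have "(b, a) \<in> ((adj_rel F ep)\<^sup>*)\<inverse>" by simp
  then show ?thesis by (simp add: rtrancl_converse[symmetric] c)
qed



lemma wf_ends: "wf_multigraph n E ep \<Longrightarrow> e \<in> E \<Longrightarrow> fst (ep e) < n \<and> snd (ep e) < n \<and> fst (ep e) \<noteq> snd (ep e)"
  unfolding wf_multigraph_def by auto

lemma matvec_add: "matvec n A (\<lambda>k. x k + y k) k = matvec n A x k + matvec n A y k"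
  unfolding matvec_def by (simp add: distrib_left sum.distrib)

lemma bridge_in_image:
  assumes wf: "wf_multigraph n E ep" and conn: "mg_connected n E ep"
    and e: "e \<in> E" "joins ep e u v" and nc: "\<not> mg_connected n (E - {e}) ep"
  shows "in_image n (Mmat E ep n) (Evec u v)"
proof -
  let ?R = "adj_rel (E - {e}) ep"
  define C where "C = {k. k < n \<and> (u, k) \<in> ?R\<^sup>*}"
  have uv: "u < n" "v < n" "u \<noteq> v" using wf_ends[OF wf e(1)] e(2) unfolding joins_def by auto
  have uC: "u \<in> C" using uv by (simp add: C_def)
  have vC: "v \<notin> C"
  proof
    assume "v \<in> C"
    then have uv1: "(u, v) \<in> ?R\<^sup>*" by (simp add: C_def)
    have "adj_rel E ep \<subseteq> ?R\<^sup>*"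
    proof
      fix p assume "p \<in> adj_rel E ep"
      then obtain a b e' where p: "p = (a, b)" "e' \<in> E" "joins ep e' a b" unfolding adj_rel_def by blast
      show "p \<in> ?R\<^sup>*"
      proof (cases "e' = e")
        case True
        then have "(a, b) = (u, v) \<or> (a, b) = (v, u)" using p e(2) unfolding joins_def by auto
        then show ?thesis using uv1 adj_sym[OF uv1] p by auto
      next
        case False
        then have "(a, b) \<in> ?R" using p unfolding adj_rel_def by auto
        then show ?thesis using p by auto
      qed
    qed
    then have "(adj_rel E ep)\<^sup>* \<subseteq> ?R\<^sup>*" by (rule rtrancl_subset_rtrancl)
    then have "mg_connected n (E - {e}) ep" using conn unfolding mg_connected_def by blast
    then show False using nc by simp
  qed
  have closed: "fst (ep e') \<in> C \<longleftrightarrow> snd (ep e') \<in> C" if "e' \<in> E - {e}" for e'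
  proof -
    have ab: "fst (ep e') < n" "snd (ep e') < n" using wf_ends[OF wf] that by auto
    have "(fst (ep e'), snd (ep e')) \<in> ?R" "(snd (ep e'), fst (ep e')) \<in> ?R"
      using that unfolding adj_rel_def joins_def by auto
    then show ?thesis using ab unfolding C_def by (auto intro: rtrancl_into_rtrancl)
  qed
  define s where "s k = (if k \<in> C then 0 else 1 :: int)" for k
  have "matvec n (Mmat E ep n) s k = Evec u v k" if k: "k < n" for k
  proof -
    have fin: "finite E" using wf unfolding wf_multigraph_def by auto
    have "matvec n (Mmat E ep n) s k = (\<Sum>e'\<in>E. ew ep s e' k)" by (rule matvec_edges[OF wf k])
    also have "\<dots> = ew ep s e k + (\<Sum>e'\<in>E - {e}. ew ep s e' k)"
      using fin e(1) by (simp add: sum.remove)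
    also have "(\<Sum>e'\<in>E - {e}. ew ep s e' k) = 0"
    proof (rule sum.neutral, rule ballI)
      fix e' assume "e' \<in> E - {e}"
      then have "s (fst (ep e')) = s (snd (ep e'))" using closed s_def by auto
      then show "ew ep s e' k = 0" unfolding ew_def by auto
    qed
    also have "ew ep s e k = Evec u v k"
    proof -
      have "ep e = (u, v) \<or> ep e = (v, u)" using e(2) unfolding joins_def .
      then show ?thesis using uC vC uv by (elim disjE) (auto simp: ew_def Evec_def s_def)
    qed
    finally show ?thesis by simp
  qed
  then show ?thesis unfolding in_image_def by blast
qed


lemma sum_cross_Evec:
  assumes wf: "wf_multigraph n E ep" and s: "\<forall>k<n. matvec n (Mmat E ep n) s k = Evec i j k"
    and U: "U \<subseteq> {0..<n}"
  shows "(\<Sum>e\<in>E. cross ep s U e) = (if i \<in> U then 1 else 0) - (if j \<in> U then 1 else 0)"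
proof -
  have fU: "finite U" using U finite_subset by blast
  have "(\<Sum>e\<in>E. cross ep s U e) = (\<Sum>k\<in>U. matvec n (Mmat E ep n) s k)"
    using sum_U[OF wf U] by simp
  also have "\<dots> = (\<Sum>k\<in>U. Evec i j k)" using s U by (intro sum.cong) auto
  finally show ?thesis using sum_Evec[OF fU] by simp
qed

lemma nz_bridge:
  assumes wf: "wf_multigraph n E ep" and s: "\<forall>k<n. matvec n (Mmat E ep n) s k = Evec i j k"
    and e0: "e0 \<in> E" "joins ep e0 p q" and lt: "s q < s p"
  shows "\<not> mg_connected n (E - {e0}) ep"
proof
  assume conn: "mg_connected n (E - {e0}) ep"
  define U where "U = {k. k < n \<and> s p \<le> s k}"
  have fin: "finite E" using wf unfolding wf_multigraph_def by auto
  have pq: "p < n" "q < n" using wf_ends[OF wf e0(1)] e0(2) unfolding joins_def by auto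
  have pU: "p \<in> U" "q \<notin> U" using pq lt by (auto simp: U_def)
  have cr: "cross ep s U e \<le> 0 \<and> ((fst (ep e) \<in> U) \<noteq> (snd (ep e) \<in> U) \<longrightarrow> cross ep s U e \<le> -1)"
    if e: "e \<in> E" for e
  proof -
    have "fst (ep e) < n" "snd (ep e) < n" using wf_ends[OF wf e] by auto
    then show ?thesis unfolding cross_def U_def by auto
  qed
  have "(\<Sum>e\<in>E. cross ep s U e) = (if i \<in> U then 1 else 0) - (if j \<in> U then 1 else 0)"
    by (rule sum_cross_Evec[OF wf s]) (auto simp: U_def)
  then have ge: "(\<Sum>e\<in>E. cross ep s U e) \<ge> -1" by auto
  have c0: "cross ep s U e0 \<le> -1"
  proof -
    have "(fst (ep e0) \<in> U) \<noteq> (snd (ep e0) \<in> U)" using e0(2) pU unfolding joins_def by auto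
    then show ?thesis using cr[OF e0(1)] by blast
  qed
  have nocross: "(fst (ep e) \<in> U) = (snd (ep e) \<in> U)" if e: "e \<in> E - {e0}" for e
  proof (rule ccontr)
    assume "(fst (ep e) \<in> U) \<noteq> (snd (ep e) \<in> U)"
    then have c1: "cross ep s U e \<le> -1" using cr e by blast
    have "(\<Sum>e\<in>E. cross ep s U e) = cross ep s U e0 + (\<Sum>e\<in>E - {e0}. cross ep s U e)"
      using fin e0(1) by (simp add: sum.remove)
    also have "(\<Sum>e\<in>E - {e0}. cross ep s U e) = cross ep s U e + (\<Sum>e\<in>E - {e0} - {e}. cross ep s U e)"
      using fin e by (simp add: sum.remove)
    also have "(\<Sum>e\<in>E - {e0} - {e}. cross ep s U e) \<le> 0"
      by (rule sum_nonpos) (use cr in auto)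
    finally show False using ge c0 c1 by linarith
  qed
  have "(p, q) \<in> (adj_rel (E - {e0}) ep)\<^sup>*" using conn pq unfolding mg_connected_def by blast
  then have "q \<in> U"
  proof (induction rule: rtrancl_induct)
    case base then show ?case using pU by simp
  next
    case (step y z)
    then obtain e where e: "e \<in> E - {e0}" "joins ep e y z" unfolding adj_rel_def by blast
    have "ep e = (y, z) \<or> ep e = (z, y)" using e(2) unfolding joins_def .
    then show ?case using nocross[OF e(1)] step.IH by auto
  qed
  then show False using pU by simp
qed

lemma image_path:
  assumes wf: "wf_multigraph n E ep" and ij: "i < n" "j < n"
    and im: "in_image n (Mmat E ep n) (Evec i j)"
  shows "\<exists>es vs. is_path E ep i j es vs \<and> (\<forall>e\<in>set es. \<not> mg_connected n (E - {e}) ep)"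
proof -
  obtain s where s: "\<forall>k<n. matvec n (Mmat E ep n) s k = Evec i j k"
    using im unfolding in_image_def by blast
  define F where "F = {e\<in>E. s (fst (ep e)) \<noteq> s (snd (ep e))}"
  have br: "\<not> mg_connected n (E - {e}) ep" if e: "e \<in> F" for e
  proof (cases "s (snd (ep e)) < s (fst (ep e))")
    case True
    then show ?thesis using e by (intro nz_bridge[OF wf s, of e "fst (ep e)" "snd (ep e)"]) (auto simp: F_def joins_def)
  next
    case False
    then have "s (fst (ep e)) < s (snd (ep e))" using e by (auto simp: F_def)
    then show ?thesis using e by (intro nz_bridge[OF wf s, of e "snd (ep e)" "fst (ep e)"]) (auto simp: F_def joins_def)
  qed
  define R where "R = {k. k < n \<and> (i, k) \<in> (adj_rel F ep)\<^sup>*}"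
  have "cross ep s R e = 0" if e: "e \<in> E" for e
  proof (cases "e \<in> F")
    case True
    have ab: "fst (ep e) < n" "snd (ep e) < n" using wf_ends[OF wf e] by auto
    have "(fst (ep e), snd (ep e)) \<in> adj_rel F ep" "(snd (ep e), fst (ep e)) \<in> adj_rel F ep"
      using True unfolding adj_rel_def joins_def by auto
    then have "fst (ep e) \<in> R \<longleftrightarrow> snd (ep e) \<in> R" using ab unfolding R_def by (auto intro: rtrancl_into_rtrancl)
    then show ?thesis unfolding cross_def by auto
  next
    case False
    then show ?thesis using e unfolding cross_def F_def by auto
  qed
  then have "(\<Sum>e\<in>E. cross ep s R e) = 0" by simp
  moreover have "(\<Sum>e\<in>E. cross ep s R e) = (if i \<in> R then 1 else 0) - (if j \<in> R then 1 else 0)"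
    by (rule sum_cross_Evec[OF wf s]) (auto simp: R_def)
  moreover have "i \<in> R" using ij by (simp add: R_def)
  ultimately have "j \<in> R" by (auto split: if_splits)
  then have "(i, j) \<in> (adj_rel F ep)\<^sup>*" by (simp add: R_def)
  from walk_path[OF this] obtain es vs where P: "set es \<subseteq> F" "distinct vs" "length vs = Suc (length es)"
    "vs ! 0 = i" "vs ! length es = j" "\<forall>k<length es. joins ep (es ! k) (vs ! k) (vs ! Suc k)" by blast
  have "distinct es" using distinct_edges[OF P(2,3,6)] .
  then have "is_path E ep i j es vs" using P unfolding is_path_def F_def by auto
  moreover have "\<forall>e\<in>set es. \<not> mg_connected n (E - {e}) ep" using P(1) br by auto
  ultimately show ?thesis by blast
qed


lemma image_add: "in_image n A y1 \<Longrightarrow> in_image n A y2 \<Longrightarrow> in_image n A (\<lambda>k. y1 k + y2 k)"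
  unfolding in_image_def using matvec_add by metis

lemma path_image:
  assumes wf: "wf_multigraph n E ep" and conn: "mg_connected n E ep"
    and P: "is_path E ep i j es vs" and br: "\<forall>e\<in>set es. \<not> mg_connected n (E - {e}) ep"
  shows "in_image n (Mmat E ep n) (Evec i j)"
proof -
  have "in_image n (Mmat E ep n) (Evec i (vs ! m))" if "m \<le> length es" for m
    using that
  proof (induction m)
    case 0
    have "Evec i (vs ! 0) = (\<lambda>k. 0)" using P unfolding is_path_def Evec_def by auto
    moreover have "matvec n (Mmat E ep n) (\<lambda>k. 0) k = 0" for k unfolding matvec_def by simp
    ultimately show ?case unfolding in_image_def by metis
  next
    case (Suc m)
    then have m: "m < length es" by simp
    have e: "es ! m \<in> E" "joins ep (es ! m) (vs ! m) (vs ! Suc m)"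
      using P m unfolding is_path_def by auto
    have "in_image n (Mmat E ep n) (Evec (vs ! m) (vs ! Suc m))"
      using bridge_in_image[OF wf conn e] br m by auto
    from image_add[OF Suc.IH[OF less_imp_le[OF m]] this]
    show ?case unfolding Evec_def by (simp add: algebra_simps)
  qed
  then show ?thesis using P unfolding is_path_def by auto
qed

lemma order_image:
  assumes wf: "wf_multigraph n E ep" and ij: "i < n" "i \<noteq> j"
  shows "has_order n (Mmat E ep n) i j 1 \<longleftrightarrow> in_image n (Mmat E ep n) (Evec i j)"
proof
  assume "has_order n (Mmat E ep n) i j 1"
  then show "in_image n (Mmat E ep n) (Evec i j)" unfolding has_order_def in_image_def by auto
next
  assume "in_image n (Mmat E ep n) (Evec i j)"
  then obtain s where s: "\<forall>k<n. matvec n (Mmat E ep n) s k = Evec i j k" unfolding in_image_def by blast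
  define g where "g = Gcd ((\<lambda>k. s k - s (n - 1)) ` {0..<n - 1})"
  have gd: "g dvd s k - s (n - 1)" if "k < n" for k
  proof (cases "k < n - 1")
    case True then show ?thesis unfolding g_def by (intro Gcd_dvd) auto
  next
    case False then have "k = n - 1" using that by simp
    then show ?thesis by simp
  qed
  have "g dvd ew ep s e i" if e: "e \<in> E" for e
  proof -
    have ab: "fst (ep e) < n" "snd (ep e) < n" using wf_ends[OF wf e] by auto
    have "g dvd s (snd (ep e)) - s (fst (ep e))"
    proof -
      have "s (snd (ep e)) - s (fst (ep e)) = (s (snd (ep e)) - s (n - 1)) - (s (fst (ep e)) - s (n - 1))" by simp
      then show ?thesis using gd[OF ab(1)] gd[OF ab(2)] by (metis dvd_diff)
    qed
    moreover then have "g dvd s (fst (ep e)) - s (snd (ep e))"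
      by (metis dvd_minus_iff minus_diff_eq)
    ultimately show ?thesis unfolding ew_def by (intro dvd_add) auto
  qed
  then have "g dvd matvec n (Mmat E ep n) s i" unfolding matvec_edges[OF wf ij(1)] by (intro dvd_sum) auto
  then have "g dvd 1" using s ij by (simp add: Evec_def)
  then have "normalize g = 1" by (simp add: is_unit_normalize)
  then have "g = 1" unfolding g_def by simp
  then show "has_order n (Mmat E ep n) i j 1" unfolding has_order_def g_def using s by auto
qed


lemma image_lap: "in_image n (laplacian E ep n) y \<longleftrightarrow> in_image n (Mmat E ep n) y"
proof -
  have "matvec n (laplacian E ep n) x k = matvec n (Mmat E ep n) (\<lambda>j. - x j) k" for x k
    unfolding matvec_def laplacian_def by (simp add: sum_negf)
  moreover have "matvec n (Mmat E ep n) x k = matvec n (laplacian E ep n) (\<lambda>j. - x j) k" for x k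
    unfolding matvec_def laplacian_def by (simp add: sum_negf)
  ultimately show ?thesis unfolding in_image_def by metis
qed

theorem corollary2p3:
  fixes n :: nat and E :: "'e set" and ep :: "'e \<Rightarrow> nat \<times> nat"
  assumes "wf_multigraph n E ep"
    and "mg_connected n E ep"
  shows "(\<forall>i<n. \<forall>j<n. i \<noteq> j \<longrightarrow>
            (has_order n (Mmat E ep n) i j 1 \<longleftrightarrow>
             (\<exists>es vs. is_path E ep i j es vs \<and>
                (\<forall>e\<in>set es. \<not> mg_connected n (E - {e}) ep))))
       \<and> (multiply_connected n E ep \<longleftrightarrow> spread n (laplacian E ep n))"
proof (intro conjI allI impI)
  fix i j assume ij: "i < n" "j < n" "i \<noteq> j"
  show "has_order n (Mmat E ep n) i j 1 \<longleftrightarrow>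
             (\<exists>es vs. is_path E ep i j es vs \<and> (\<forall>e\<in>set es. \<not> mg_connected n (E - {e}) ep))"
    using order_image[OF assms(1) ij(1,3)] image_path[OF assms(1) ij(1,2)] path_image[OF assms]
    by blast
next
  show "multiply_connected n E ep \<longleftrightarrow> spread n (laplacian E ep n)"
  proof
    assume mc: "multiply_connected n E ep"
    show "spread n (laplacian E ep n)" unfolding spread_def
    proof (intro allI impI notI)
      fix i j assume ij: "i < n" "j < n" "i \<noteq> j" and im: "in_image n (laplacian E ep n) (Evec i j)"
      then obtain es vs where P: "is_path E ep i j es vs" "\<forall>e\<in>set es. \<not> mg_connected n (E - {e}) ep"
        using image_path[OF assms(1) ij(1,2)] image_lap by metis
      have "es \<noteq> []" using P(1) ij(3) unfolding is_path_def by auto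
      then have "es ! 0 \<in> set es" by simp
      moreover then have "es ! 0 \<in> E" using P(1) unfolding is_path_def by auto
      ultimately show False using P(2) mc unfolding multiply_connected_def by blast
    qed
  next
    assume sp: "spread n (laplacian E ep n)"
    show "multiply_connected n E ep" unfolding multiply_connected_def
    proof (rule ballI, rule ccontr)
      fix e assume e: "e \<in> E" and nc: "\<not> mg_connected n (E - {e}) ep"
      have ab: "fst (ep e) < n" "snd (ep e) < n" "fst (ep e) \<noteq> snd (ep e)" using wf_ends[OF assms(1) e] by auto
      have "is_path E ep (fst (ep e)) (snd (ep e)) [e] [fst (ep e), snd (ep e)]"
        using e unfolding is_path_def joins_def by auto
      then have "in_image n (Mmat E ep n) (Evec (fst (ep e)) (snd (ep e)))"
        using path_image[OF assms] nc by auto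
      then show False using sp ab image_lap unfolding spread_def by metis
    qed
  qed
qed

end
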